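(* Let $G$ be a bipartite instance, let $(u,v)\in E$ with $u$'s deadline earlier than $v$'s, and fix the ranks $\mathbf y_{-uv}$ of all vertices other than $u,v$. Let $\tau$ be the marginal rank of $u$ w.r.t. $\mathbf y_{-uv}$ in $G-\{v\}$ and, for $y_u\in[0,1]$, let $\theta(y_u)$ be the marginal rank of $v$ in $G$ w.r.t. the ranks $(y_u,\mathbf y_{-uv})$. Then there exists $\theta\in[0,1]$ such that $\theta(y_u)=\theta$ for all $y_u>\tau$.
   Context: Fully online matching model on a graph $G=(V,E)$: each step is the arrival or the deadline of a vertex; at arrival, edges to previously arrived vertices are revealed; every neighbor of $v$ arrives before $v$'s deadline; at a vertex's deadline, if unmatched, it is irrevocably matched to an unmatched neighbor or left unmatched. Ranking: each vertex $w$ has a rank $y_w\in[0,1)$; at the deadline of an unmatched vertex $w$, if it has unmatched neighbors it is matched to the unmatched neighbor of minimum rank. If an edge $(a,b)$ is matched at $a$'s deadline, $a$ is called active and $b$ passive. Marginal rank: for a vertex $w$ in a graph $H$ and fixed ranks of all other vertices of $H$, the marginal rank of $w$ is the largest value $\theta\in[0,1]$ such that $w$ is passive in the matching produced by Ranking on $H$ when $y_w=\theta^-$ (rank infinitesimally below $\theta$); it equals $0$ if no such value exists. *)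

theory Defs
  imports Complex_Main
begin

datatype 'v event = Arr 'v | Dl 'v

definition valid_instance :: "'v event list \<Rightarrow> ('v \<Rightarrow> 'v \<Rightarrow> bool) \<Rightarrow> bool" where
  "valid_instance evs E \<longleftrightarrow>
     distinct evs \<and>
     (\<forall>v. Arr v \<in> set evs \<longleftrightarrow> Dl v \<in> set evs) \<and>
     (\<forall>a b. E a b \<longrightarrow> E b a) \<and>
     (\<forall>a. \<not> E a a) \<and>
     (\<forall>a b. E a b \<longrightarrow> Arr a \<in> set evs \<and> Arr b \<in> set evs) \<and>
     (\<forall>i j v. i < length evs \<and> j < length evs \<and> evs ! i = Dl v \<and> evs ! j = Arr v
        \<longrightarrow> j < i) \<and>
     (\<forall>i j v w. i < length evs \<and> j < length evs \<and> E v w \<and> evs ! i = Dl v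
        \<and> evs ! j = Arr w \<longrightarrow> j < i)"

definition bipartite_instance :: "'v event list \<Rightarrow> ('v \<Rightarrow> 'v \<Rightarrow> bool) \<Rightarrow> bool" where
  "bipartite_instance evs E \<longleftrightarrow> valid_instance evs E \<and>
     (\<exists>L :: 'v set. \<forall>a b. E a b \<longrightarrow> (a \<in> L \<longleftrightarrow> b \<notin> L))"

definition deadline_before :: "'v event list \<Rightarrow> 'v \<Rightarrow> 'v \<Rightarrow> bool" where
  "deadline_before evs u v \<longleftrightarrow>
     (\<exists>i j. i < j \<and> j < length evs \<and> evs ! i = Dl u \<and> evs ! j = Dl v)"

definition remove_evs :: "'v event list \<Rightarrow> 'v \<Rightarrow> 'v event list" where
  "remove_evs evs v = filter (\<lambda>e. e \<noteq> Arr v \<and> e \<noteq> Dl v) evs"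

definition remove_E :: "('v \<Rightarrow> 'v \<Rightarrow> bool) \<Rightarrow> 'v \<Rightarrow> 'v \<Rightarrow> 'v \<Rightarrow> bool" where
  "remove_E E v = (\<lambda>a b. E a b \<and> a \<noteq> v \<and> b \<noteq> v)"

text \<open>State: arrived vertices, partner map, set of passive vertices.
Ties in rank are broken by the (fixed) linear order on vertex names.\<close>

type_synonym 'v rstate = "'v set \<times> ('v \<Rightarrow> 'v option) \<times> 'v set"

definition min_rank :: "('v::linorder \<Rightarrow> real) \<Rightarrow> 'v set \<Rightarrow> 'v" where
  "min_rank y C = (THE x. x \<in> C \<and> (\<forall>z\<in>C. y x < y z \<or> (y x = y z \<and> x \<le> z)))"

fun rank_step :: "('v::linorder \<Rightarrow> 'v \<Rightarrow> bool) \<Rightarrow> ('v \<Rightarrow> real) \<Rightarrow> 'v rstate \<Rightarrow> 'v event \<Rightarrow> 'v rstate" where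
  "rank_step E y (A, m, P) (Arr w) = (insert w A, m, P)"
| "rank_step E y (A, m, P) (Dl w) =
     (if m w = None \<and> (\<exists>x\<in>A. E w x \<and> m x = None) then
        (let x = min_rank y {x \<in> A. E w x \<and> m x = None}
         in (A, m(w := Some x, x := Some w), insert x P))
      else (A, m, P))"

definition ranking :: "'v::linorder event list \<Rightarrow> ('v \<Rightarrow> 'v \<Rightarrow> bool) \<Rightarrow> ('v \<Rightarrow> real) \<Rightarrow> 'v rstate" where
  "ranking evs E y = foldl (rank_step E y) ({}, (\<lambda>_. None), {}) evs"

definition is_passive :: "'v::linorder event list \<Rightarrow> ('v \<Rightarrow> 'v \<Rightarrow> bool) \<Rightarrow> ('v \<Rightarrow> real) \<Rightarrow> 'v \<Rightarrow> bool" where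
  "is_passive evs E y w \<longleftrightarrow> w \<in> snd (snd (ranking evs E y))"

definition passive_below :: "'v::linorder event list \<Rightarrow> ('v \<Rightarrow> 'v \<Rightarrow> bool) \<Rightarrow> ('v \<Rightarrow> real) \<Rightarrow> 'v \<Rightarrow> real \<Rightarrow> bool" where
  "passive_below evs E y w \<theta> \<longleftrightarrow>
     (\<exists>\<epsilon>>0. \<forall>t. \<theta> - \<epsilon> < t \<and> t < \<theta> \<longrightarrow> is_passive evs E (y(w := t)) w)"

definition marginal_rank :: "'v::linorder event list \<Rightarrow> ('v \<Rightarrow> 'v \<Rightarrow> bool) \<Rightarrow> ('v \<Rightarrow> real) \<Rightarrow> 'v \<Rightarrow> real" where
  "marginal_rank evs E y w =
     (let S = {\<theta> \<in> {0..1}. passive_below evs E y w \<theta>} in if S = {} then 0 else Sup S)"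

end

theory Submission
  imports Defs
begin

definition keymin :: "('v::linorder \<Rightarrow> real) \<Rightarrow> 'v \<Rightarrow> 'v set \<Rightarrow> bool" where
  "keymin y x C \<longleftrightarrow> x \<in> C \<and> (\<forall>z\<in>C. y x < y z \<or> (y x = y z \<and> x \<le> z))"

lemma min_rank_unique: "keymin y x C \<Longrightarrow> min_rank y C = x"
  unfolding min_rank_def keymin_def
  apply (rule the_equality)
   apply simp
  by (metis antisym less_asym order_less_irrefl)

lemma keymin_exists: "finite C \<Longrightarrow> C \<noteq> {} \<Longrightarrow> \<exists>x. keymin (y::'v::linorder \<Rightarrow> real) x C"
proof (induction C rule: finite_induct)
  case empty then show ?case by simp
next
  case (insert a F)
  show ?case
  proof (cases "F = {}")
    case True then show ?thesis by (auto simp: keymin_def)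
  next
    case False
    then obtain x where x: "keymin y x F" using insert by blast
    show ?thesis
    proof (cases "y a < y x \<or> (y a = y x \<and> a \<le> x)")
      case True
      have "\<forall>z\<in>F. y a < y z \<or> (y a = y z \<and> a \<le> z)"
      proof
        fix z assume "z \<in> F"
        then have "y x < y z \<or> (y x = y z \<and> x \<le> z)" using x unfolding keymin_def by blast
        then show "y a < y z \<or> (y a = y z \<and> a \<le> z)" using True by (auto intro: order_trans)
      qed
      then have "keymin y a (insert a F)" unfolding keymin_def by auto
      then show ?thesis by blast
    next
      case False
      then have "keymin y x (insert a F)" using x unfolding keymin_def
        by auto
      then show ?thesis by blast
    qed
  qed
qed

lemma min_rank_keymin: "finite C \<Longrightarrow> C \<noteq> {} \<Longrightarrow> keymin y (min_rank y C) C"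
  using keymin_exists min_rank_unique by metis

lemma min_rank_in: "finite C \<Longrightarrow> C \<noteq> {} \<Longrightarrow> min_rank y C \<in> C"
  using min_rank_keymin keymin_def by metis

lemma step_facts:
  assumes "finite A" "rank_step E y (A,m,P) e = (A1,m1,P1)"
  shows "finite A1 \<and> A \<subseteq> A1 \<and> P \<subseteq> P1 \<and> (\<forall>x. m x \<noteq> None \<longrightarrow> m1 x \<noteq> None)
     \<and> (\<forall>x\<in>P1 - P. m x = None)"
proof (cases e)
  case (Arr w) then show ?thesis using assms by auto
next
  case (Dl w)
  show ?thesis
  proof (cases "m w = None \<and> (\<exists>x\<in>A. E w x \<and> m x = None)")
    case True
    let ?C = "{x \<in> A. E w x \<and> m x = None}"
    have "min_rank y ?C \<in> ?C" using True assms(1) by (intro min_rank_in) auto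
    then show ?thesis using assms True Dl by (auto simp: Let_def)
  next
    case False
    have "rank_step E y (A,m,P) e = (A,m,P)" unfolding Dl rank_step.simps if_not_P[OF False] by simp
    then show ?thesis using assms by auto
  qed
qed

lemma run_facts:
  "finite A \<Longrightarrow> foldl (rank_step E y) (A,m,P) evs = (A1,m1,P1) \<Longrightarrow>
   finite A1 \<and> A \<subseteq> A1 \<and> P \<subseteq> P1 \<and> (\<forall>x. m x \<noteq> None \<longrightarrow> m1 x \<noteq> None)
     \<and> (\<forall>x\<in>P1 - P. m x = None)"
proof (induction evs arbitrary: A m P)
  case Nil then show ?case by simp
next
  case (Cons e evs)
  obtain A' m' P' where s: "rank_step E y (A,m,P) e = (A',m',P')" by (metis prod_cases3)
  have f1: "finite A' \<and> A \<subseteq> A' \<and> P \<subseteq> P' \<and> (\<forall>x. m x \<noteq> None \<longrightarrow> m' x \<noteq> None)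
     \<and> (\<forall>x\<in>P' - P. m x = None)" using step_facts[OF Cons.prems(1) s] .
  have "foldl (rank_step E y) (A',m',P') evs = (A1,m1,P1)" using Cons.prems(2) s by simp
  then have f2: "finite A1 \<and> A' \<subseteq> A1 \<and> P' \<subseteq> P1 \<and> (\<forall>x. m' x \<noteq> None \<longrightarrow> m1 x \<noteq> None)
     \<and> (\<forall>x\<in>P1 - P'. m' x = None)" using Cons.IH f1 by blast
  show ?case using f1 f2 by blast
qed

lemma step_raise:
  assumes "finite A" "\<forall>w. w \<noteq> u \<longrightarrow> y' w = y w" "y u \<le> y' u"
    "u \<notin> snd (snd (rank_step E y (A,m,P) e))"
  shows "rank_step E y' (A,m,P) e = rank_step E y (A,m,P) e"
proof (cases e)
  case (Arr w) then show ?thesis by simp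
next
  case (Dl w)
  show ?thesis
  proof (cases "m w = None \<and> (\<exists>x\<in>A. E w x \<and> m x = None)")
    case True
    let ?C = "{x \<in> A. E w x \<and> m x = None}"
    have k: "keymin y (min_rank y ?C) ?C" using True assms(1) by (intro min_rank_keymin) auto
    have xu: "min_rank y ?C \<noteq> u" using assms(4) True Dl by (auto simp: Let_def)
    have "keymin y' (min_rank y ?C) ?C" using k xu assms(2,3) unfolding keymin_def
      by (smt (verit, best))
    then have "min_rank y' ?C = min_rank y ?C" by (rule min_rank_unique)
    then show ?thesis using True Dl by (simp add: Let_def)
  next
    case False then show ?thesis unfolding Dl rank_step.simps if_not_P[OF False] by simp
  qed
qed

lemma run_raise:
  assumes "\<forall>w. w \<noteq> u \<longrightarrow> y' w = y w" "y u \<le> y' u"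
  shows "finite A \<Longrightarrow> u \<notin> snd (snd (foldl (rank_step E y) (A,m,P) evs)) \<Longrightarrow>
    foldl (rank_step E y') (A,m,P) evs = foldl (rank_step E y) (A,m,P) evs"
proof (induction evs arbitrary: A m P)
  case Nil then show ?case by simp
next
  case (Cons e evs)
  obtain A' m' P' where s: "rank_step E y (A,m,P) e = (A',m',P')" by (metis prod_cases3)
  have f1: "finite A'" using step_facts[OF Cons.prems(1) s] by blast
  obtain A1 m1 P1 where r: "foldl (rank_step E y) (A',m',P') evs = (A1,m1,P1)" by (metis prod_cases3)
  have "P' \<subseteq> P1" using run_facts[OF f1 r] by blast
  moreover have "u \<notin> P1" using Cons.prems(2) s r by simp
  ultimately have "u \<notin> P'" by blast
  then have "rank_step E y' (A,m,P) e = (A',m',P')" using step_raise[OF Cons.prems(1) assms] s by simp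
  then show ?case using Cons.IH[OF f1] Cons.prems(2) s by simp
qed


lemma couple_step:
  assumes "finite A" "m v = None" "rank_step E y (A,m,P) e = (A1,m1,P1)" "m1 v = None"
    "\<forall>w. w \<noteq> v \<longrightarrow> yH w = y w"
  shows "foldl (rank_step (remove_E E v) yH) (A - {v}, m, P) (remove_evs [e] v) = (A1 - {v}, m1, P1)"
proof (cases e)
  case (Arr w) then show ?thesis using assms(3) by (cases "w = v") (auto simp: remove_evs_def)
next
  case (Dl w)
  let ?c = "m w = None \<and> (\<exists>x\<in>A. E w x \<and> m x = None)"
  let ?C = "{x \<in> A. E w x \<and> m x = None}"
  show ?thesis
  proof (cases ?c)
    case False
    have g: "rank_step E y (A,m,P) e = (A,m,P)" unfolding Dl rank_step.simps if_not_P[OF False] by simp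
    show ?thesis
    proof (cases "w = v")
      case True then show ?thesis using g assms(3) Dl by (auto simp: remove_evs_def)
    next
      case wv: False
      have nc: "\<not> (m w = None \<and> (\<exists>x\<in>A - {v}. remove_E E v w x \<and> m x = None))"
        using False by (auto simp: remove_E_def)
      have hs: "rank_step (remove_E E v) yH (A - {v}, m, P) (Dl w) = (A - {v}, m, P)"
        unfolding rank_step.simps if_not_P[OF nc] by simp
      have e: "A1 = A" "m1 = m" "P1 = P" using g assms(3) by auto
      have "remove_evs [e] v = [Dl w]" using wv Dl by (simp add: remove_evs_def)
      then show ?thesis using hs e by (simp del: rank_step.simps)
    qed
  next
    case True
    have k: "keymin y (min_rank y ?C) ?C" using True assms(1) by (intro min_rank_keymin) auto
    define x where "x = min_rank y ?C"
    have g: "rank_step E y (A,m,P) e = (A, m(w := Some x, x := Some w), insert x P)"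
      using True Dl by (simp add: Let_def x_def)
    then have m1: "m1 = m(w := Some x, x := Some w)" and A1: "A1 = A" and P1: "P1 = insert x P"
      using assms(3) by auto
    have xv: "x \<noteq> v" and wv: "w \<noteq> v" using assms(4) m1 by (auto split: if_splits)
    let ?C' = "{x \<in> A - {v}. remove_E E v w x \<and> m x = None}"
    have kx: "keymin y x ?C" using k x_def by simp
    have "keymin yH x ?C'" using kx xv wv assms(5) unfolding keymin_def remove_E_def
      by auto
    then have mr: "min_rank yH ?C' = x" by (rule min_rank_unique)
    have c': "m w = None \<and> (\<exists>x\<in>A - {v}. remove_E E v w x \<and> m x = None)"
      using kx xv wv True unfolding keymin_def remove_E_def by auto
    have "rank_step (remove_E E v) yH (A - {v}, m, P) (Dl w) = (A - {v}, m(w := Some x, x := Some w), insert x P)"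
      using c' mr by (simp add: Let_def)
    then show ?thesis using Dl wv m1 A1 P1 by (simp add: remove_evs_def)
  qed
qed

lemma matched_step:
  assumes "finite A" "m v = None" "rank_step E y (A,m,P) e = (A1,m1,P1)" "m1 v \<noteq> None"
    "u \<notin> P" "e = Dl v \<longrightarrow> m u \<noteq> None" "u \<noteq> v"
  shows "u \<notin> P1"
proof (cases e)
  case (Arr w) then show ?thesis using assms by auto
next
  case (Dl w)
  let ?c = "m w = None \<and> (\<exists>x\<in>A. E w x \<and> m x = None)"
  let ?C = "{x \<in> A. E w x \<and> m x = None}"
  show ?thesis
  proof (cases ?c)
    case False
    have g: "rank_step E y (A,m,P) e = (A,m,P)" unfolding Dl rank_step.simps if_not_P[OF False] by simp
    then show ?thesis using assms by auto
  next
    case True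
    have k: "keymin y (min_rank y ?C) ?C" using True assms(1) by (intro min_rank_keymin) auto
    define x where "x = min_rank y ?C"
    have g: "rank_step E y (A,m,P) e = (A, m(w := Some x, x := Some w), insert x P)"
      using True Dl by (simp add: Let_def x_def)
    then have m1: "m1 = m(w := Some x, x := Some w)" and P1: "P1 = insert x P"
      using assms(3) by auto
    have "w = v \<or> x = v" using assms(2,4) m1 by (auto split: if_splits)
    moreover have "m x = None" using k x_def keymin_def by (metis (mono_tags, lifting) mem_Collect_eq)
    ultimately have "x \<noteq> u" using assms(6,7) Dl by auto
    then show ?thesis using P1 assms(5) by auto
  qed
qed

lemma matched_persist:
  assumes "finite A" "m v \<noteq> None"
  shows "(v \<in> snd (snd (foldl (rank_step E y) (A,m,P) evs))) = (v \<in> P)"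
proof -
  obtain A1 m1 P1 where r: "foldl (rank_step E y) (A,m,P) evs = (A1,m1,P1)" by (metis prod_cases3)
  have f: "P \<subseteq> P1" "\<forall>x\<in>P1 - P. m x = None" using run_facts[OF assms(1) r] by blast+
  have "v \<in> P1 \<longleftrightarrow> v \<in> P" using f assms(2) by (metis Diff_iff subsetD)
  then show ?thesis using r by simp
qed


definition Qp :: "'v \<Rightarrow> 'v \<Rightarrow> 'v set \<Rightarrow> ('v \<Rightarrow> 'v option) \<Rightarrow> 'v event list \<Rightarrow> bool" where
  "Qp u v A m evs \<longleftrightarrow> m u \<noteq> None \<or>
     (\<exists>xs ys. evs = xs @ Dl u # ys \<and> Dl v \<notin> set xs \<and> (v \<in> A \<or> Arr v \<in> set xs))"

lemma Q_step:
  assumes "finite A" "m v = None" "E u v" "u \<noteq> v" "Qp u v A m (e # rest)"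
    "rank_step E y (A,m,P) e = (A1,m1,P1)"
  shows "Qp u v A1 m1 rest \<and> (e = Dl v \<longrightarrow> m u \<noteq> None)"
proof -
  have sf: "A \<subseteq> A1 \<and> (\<forall>x. m x \<noteq> None \<longrightarrow> m1 x \<noteq> None)" using step_facts[OF assms(1,6)] by blast
  show ?thesis
  proof (cases "m u = None")
    case False then show ?thesis using sf unfolding Qp_def by blast
  next
    case mu: True
    then obtain xs ys where xs: "e # rest = xs @ Dl u # ys" "Dl v \<notin> set xs" "v \<in> A \<or> Arr v \<in> set xs"
      using assms(5) unfolding Qp_def by blast
    show ?thesis
    proof (cases xs)
      case Nil
      then have e: "e = Dl u" and vA: "v \<in> A" using xs by auto
      have c: "m u = None \<and> (\<exists>x\<in>A. E u x \<and> m x = None)" using mu vA assms(2,3) by blast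
      then have "m1 u \<noteq> None" using assms(6) e by (auto simp: Let_def)
      then show ?thesis using e assms(4) unfolding Qp_def by auto
    next
      case (Cons e0 xs')
      then have e0: "e0 = e" "rest = xs' @ Dl u # ys" using xs by auto
      have "v \<in> A1 \<or> Arr v \<in> set xs'"
      proof (cases "e = Arr v")
        case True then show ?thesis using assms(6) by auto
      next
        case False then show ?thesis using xs Cons e0 sf by auto
      qed
      moreover have "Dl v \<notin> set xs'" "e \<noteq> Dl v" using xs Cons e0 by auto
      ultimately show ?thesis using e0 unfolding Qp_def by blast
    qed
  qed
qed

lemma keyK:
  assumes "\<forall>w. w \<noteq> u \<longrightarrow> y' w = y w" "y u \<le> y' u" "\<forall>w. w \<noteq> v \<longrightarrow> yH w = y w"
    "u \<noteq> v" "E u v"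
  shows "finite A \<Longrightarrow> m v = None \<Longrightarrow> u \<notin> P \<Longrightarrow>
    u \<notin> snd (snd (foldl (rank_step (remove_E E v) yH) (A - {v}, m, P) (remove_evs evs v))) \<Longrightarrow>
    Qp u v A m evs \<Longrightarrow>
    (v \<in> snd (snd (foldl (rank_step E y) (A,m,P) evs))) =
    (v \<in> snd (snd (foldl (rank_step E y') (A,m,P) evs)))"
proof (induction evs arbitrary: A m P)
  case Nil then show ?case by simp
next
  case (Cons e rest)
  obtain A1 m1 P1 where s: "rank_step E y (A,m,P) e = (A1,m1,P1)" by (metis prod_cases3)
  have sf: "finite A1" using step_facts[OF Cons.prems(1) s] by blast
  have Q: "Qp u v A1 m1 rest" "e = Dl v \<longrightarrow> m u \<noteq> None"
    using Q_step[OF Cons.prems(1,2) assms(5,4) Cons.prems(5) s] by blast+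
  show ?case
  proof (cases "m1 v = None")
    case True
    have c: "foldl (rank_step (remove_E E v) yH) (A - {v}, m, P) (remove_evs [e] v) = (A1 - {v}, m1, P1)"
      using couple_step[OF Cons.prems(1,2) s True assms(3)] .
    have re: "remove_evs (e # rest) v = remove_evs [e] v @ remove_evs rest v"
      by (simp add: remove_evs_def)
    have H: "u \<notin> snd (snd (foldl (rank_step (remove_E E v) yH) (A1 - {v}, m1, P1) (remove_evs rest v)))"
      using Cons.prems(4) unfolding re foldl_append c .
    obtain A2 m2 P2 where r2: "foldl (rank_step (remove_E E v) yH) (A1 - {v}, m1, P1) (remove_evs rest v) = (A2,m2,P2)"
      by (metis prod_cases3)
    have "P1 \<subseteq> P2" using run_facts[OF _ r2] sf by blast
    then have uP1: "u \<notin> P1" using H r2 by auto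
    have st: "rank_step E y' (A,m,P) e = (A1,m1,P1)"
      using step_raise[OF Cons.prems(1) assms(1,2)] s uP1 by simp
    have "(v \<in> snd (snd (foldl (rank_step E y) (A1,m1,P1) rest))) =
          (v \<in> snd (snd (foldl (rank_step E y') (A1,m1,P1) rest)))"
      using Cons.IH[OF sf True uP1 H Q(1)] .
    then show ?thesis using s st by simp
  next
    case False
    have uP1: "u \<notin> P1" using matched_step[OF Cons.prems(1,2) s False Cons.prems(3) Q(2) assms(4)] .
    have st: "rank_step E y' (A,m,P) e = (A1,m1,P1)"
      using step_raise[OF Cons.prems(1) assms(1,2)] s uP1 by simp
    show ?thesis using s st matched_persist[where m=m1 and v=v, OF sf False] by simp
  qed
qed


lemma marginal_rank_range: "marginal_rank evs E y w \<in> {0..1}"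
proof -
  let ?S = "{\<theta> \<in> {0..1}. passive_below evs E y w \<theta>}"
  show ?thesis
  proof (cases "?S = {}")
    case True then show ?thesis by (simp add: marginal_rank_def)
  next
    case False
    have b: "bdd_above ?S" by (rule bdd_aboveI[where M=1]) auto
    obtain s where s: "s \<in> ?S" using False by blast
    have "0 \<le> Sup ?S" using cSup_upper[OF s b] s by auto
    moreover have "Sup ?S \<le> 1" using cSup_least[OF False] by auto
    ultimately show ?thesis using False by (simp add: marginal_rank_def Let_def)
  qed
qed

lemma not_passive_above:
  assumes "a \<in> {0..1}" "a > marginal_rank evs E y u"
  shows "\<not> is_passive evs E (y(u := a)) u"
proof
  assume pa: "is_passive evs E (y(u := a)) u"
  have "is_passive evs E (y(u := t)) u" if "t < a" for t
  proof (rule ccontr)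
    assume np: "\<not> is_passive evs E (y(u := t)) u"
    have "foldl (rank_step E (y(u := a))) ({}, \<lambda>_. None, {}) evs = foldl (rank_step E (y(u := t))) ({}, \<lambda>_. None, {}) evs"
      by (rule run_raise) (use that np in \<open>auto simp: is_passive_def ranking_def\<close>)
    then show False using pa np by (simp add: is_passive_def ranking_def)
  qed
  then have "passive_below evs E y u a" unfolding passive_below_def
    by (intro exI[where x=1]) auto
  then have aS: "a \<in> {\<theta> \<in> {0..1}. passive_below evs E y u \<theta>}" using assms(1) by auto
  have b: "bdd_above {\<theta> \<in> {0..1}. passive_below evs E y u \<theta>}" by (rule bdd_aboveI[where M=1]) auto
  have "a \<le> marginal_rank evs E y u" using cSup_upper[OF aS b] aS
    by (auto simp: marginal_rank_def Let_def)
  then show False using assms(2) by simp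
qed


lemma Q_init:
  assumes "valid_instance evs E" "E u v" "deadline_before evs u v"
  shows "Qp u v {} (\<lambda>_. None) evs"
proof -
  obtain i j where ij: "i < j" "j < length evs" "evs ! i = Dl u" "evs ! j = Dl v"
    using assms(3) unfolding deadline_before_def by blast
  have il: "i < length evs" using ij by simp
  have d: "distinct evs" using assms(1) unfolding valid_instance_def by blast
  have dec: "evs = take i evs @ Dl u # drop (Suc i) evs" using id_take_nth_drop[OF il] ij by simp
  have "Dl v \<notin> set (take i evs)"
  proof
    assume "Dl v \<in> set (take i evs)"
    then obtain k where k: "k < i" "evs ! k = Dl v" by (auto simp: in_set_conv_nth)
    then have "k = j" using d ij nth_eq_iff_index_eq[of evs k j] by simp
    then show False using k ij by simp
  qed
  moreover have "Arr v \<in> set (take i evs)"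
  proof -
    have "Arr v \<in> set evs" using assms(1,2) unfolding valid_instance_def by blast
    then obtain k where k: "k < length evs" "evs ! k = Arr v" by (auto simp: in_set_conv_nth)
    then have "k < i" using assms(1,2) il ij unfolding valid_instance_def by blast
    then show ?thesis using k by (auto simp: in_set_conv_nth)
  qed
  ultimately show ?thesis unfolding Qp_def using dec by blast
qed

theorem mainTheorem10:
  fixes evs :: "'v::linorder event list" and E :: "'v \<Rightarrow> 'v \<Rightarrow> bool"
    and u v :: 'v and y :: "'v \<Rightarrow> real"
  assumes "bipartite_instance evs E"
    and "E u v"
    and "deadline_before evs u v"
    and "\<forall>w. w \<noteq> u \<and> w \<noteq> v \<longrightarrow> 0 \<le> y w \<and> y w < 1"
  shows "\<exists>\<theta>\<in>{0..1}. \<forall>yu \<in> {0..1}.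
           yu > marginal_rank (remove_evs evs v) (remove_E E v) y u \<longrightarrow>
           marginal_rank evs E (y(u := yu)) v = \<theta>"
proof -
  have vi: "valid_instance evs E" using assms(1) unfolding bipartite_instance_def by blast
  have uv: "u \<noteq> v" using vi assms(2) unfolding valid_instance_def by blast
  have Q: "Qp u v {} (\<lambda>_. None) evs" using Q_init[OF vi assms(2,3)] .
  show ?thesis
  proof (rule bexI[where x="marginal_rank evs E (y(u := 1)) v"], intro ballI impI)
    fix a :: real assume a: "a \<in> {0..1}" "a > marginal_rank (remove_evs evs v) (remove_E E v) y u"
    have nH: "\<not> is_passive (remove_evs evs v) (remove_E E v) (y(u := a)) u"
      using not_passive_above[OF a] .
    have pw: "is_passive evs E (y(u := a, v := t)) v = is_passive evs E (y(u := 1, v := t)) v" for t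
    proof -
      have "(v \<in> snd (snd (foldl (rank_step E (y(u := a, v := t))) ({},\<lambda>_. None,{}) evs))) =
        (v \<in> snd (snd (foldl (rank_step E (y(u := 1, v := t))) ({},\<lambda>_. None,{}) evs)))"
        by (rule keyK[where u=u and v=v and E=E and y="y(u:=a,v:=t)" and y'="y(u:=1,v:=t)" and yH="y(u:=a)"])
          (use uv assms(2) Q a nH in \<open>auto simp: is_passive_def ranking_def\<close>)
      then show ?thesis by (simp add: is_passive_def ranking_def)
    qed
    have "passive_below evs E (y(u := a)) v \<theta> = passive_below evs E (y(u := 1)) v \<theta>" for \<theta>
      unfolding passive_below_def using pw by simp
    then show "marginal_rank evs E (y(u := a)) v = marginal_rank evs E (y(u := 1)) v"
      unfolding marginal_rank_def by simp
  qed (rule marginal_rank_range)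
qed

end
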